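(* Let $L$ be a frame and $\mathcal F\subseteq\mathsf{Filt}(L)$ such that for every $F\in\mathcal F$ and $a\in L$, the filter $\{x\in L\mid x\vee a\in F\}$ belongs to $\mathcal F$. Then $\mathrm{Int}(\mathcal F)$ is a subcolocale of the coframe $(\mathsf{Filt}(L),\sqsubseteq)$; that is, $\mathrm{Int}(\mathcal F)$ is closed under all joins (intersections) of $\mathsf{Filt}(L)$, and $H\setminus G\in\mathrm{Int}(\mathcal F)$ for all $H\in\mathrm{Int}(\mathcal F)$ and $G\in\mathsf{Filt}(L)$.
   Context: A frame is a complete lattice $L$ with $(\bigvee A)\wedge b=\bigvee_{a\in A}(a\wedge b)$. A filter is a nonempty up-closed subset closed under finite meets. $\mathsf{Filt}(L)$ denotes the set of filters ordered by reverse inclusion ($F\sqsubseteq G$ iff $G\subseteq F$); it is a coframe in which joins are intersections and the co-Heyting difference is $H\setminus G=\{a\in L\mid\forall b\in G,\ b\vee a\in H\}$, characterised by $H\setminus G\sqsubseteq F$ iff $H\sqsubseteq F\sqcup G$. $\mathrm{Int}(\mathcal F)$ is the set of intersections of subfamilies of $\mathcal F$ (empty intersection $=L$). *)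

theory Defs
  imports Main
begin

definition is_frame :: "'a::complete_lattice itself \<Rightarrow> bool" where
  "is_frame _ \<longleftrightarrow> (\<forall>(A::'a set) b. inf (Sup A) b = Sup ((\<lambda>a. inf a b) ` A))"

definition is_filter :: "'a::complete_lattice set \<Rightarrow> bool" where
  "is_filter F \<longleftrightarrow> F \<noteq> {} \<and> (\<forall>a b. a \<in> F \<longrightarrow> a \<le> b \<longrightarrow> b \<in> F)
     \<and> (\<forall>a b. a \<in> F \<longrightarrow> b \<in> F \<longrightarrow> inf a b \<in> F)"

definition Filt :: "'a::complete_lattice set set" where
  "Filt = {F. is_filter F}"

text \<open>Co-Heyting difference in Filt(L) (ordered by reverse inclusion).\<close>
definition filt_diff :: "'a::complete_lattice set \<Rightarrow> 'a set \<Rightarrow> 'a set" where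
  "filt_diff H G = {a. \<forall>b\<in>G. sup b a \<in> H}"

text \<open>Int(F): intersections of subfamilies (empty intersection = UNIV = L).\<close>
definition IntFam :: "'a set set \<Rightarrow> 'a set set" where
  "IntFam \<F> = {\<Inter>\<S> | \<S>. \<S> \<subseteq> \<F>}"

end

theory Submission
  imports Defs
begin

lemma inter_filter:
  assumes "\<S> \<subseteq> Filt" shows "\<Inter>\<S> \<in> Filt"
proof -
  have top: "top \<in> F" if "F \<in> \<S>" for F
  proof -
    from that assms have f: "is_filter F" by (auto simp: Filt_def)
    then obtain a where "a \<in> F" by (auto simp: is_filter_def)
    with f show ?thesis unfolding is_filter_def by (meson top_greatest)
  qed
  show ?thesis using assms unfolding Filt_def is_filter_def
    using top by (auto simp: Filt_def is_filter_def) blast+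
qed

theorem mainTheorem8:
  fixes \<F> :: "'a::complete_lattice set set"
  assumes frame: "is_frame TYPE('a)"
    and sub: "\<F> \<subseteq> Filt"
    and closed: "\<And>F a. F \<in> \<F> \<Longrightarrow> {x. sup x a \<in> F} \<in> \<F>"
  shows "IntFam \<F> \<subseteq> Filt
    \<and> (\<forall>\<S>. \<S> \<subseteq> IntFam \<F> \<longrightarrow> \<Inter>\<S> \<in> IntFam \<F>)
    \<and> (\<forall>H\<in>IntFam \<F>. \<forall>G\<in>Filt. filt_diff H G \<in> IntFam \<F>)"
proof (intro conjI allI impI ballI)
  show "IntFam \<F> \<subseteq> Filt"
    using sub inter_filter by (auto simp: IntFam_def)
next
  fix \<S> assume S: "\<S> \<subseteq> IntFam \<F>"
  define U where "U = {F\<in>\<F>. \<exists>X\<in>\<S>. X \<subseteq> F}"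
  have "\<Inter>\<S> = \<Inter>U"
  proof
    show "\<Inter>\<S> \<subseteq> \<Inter>U" unfolding U_def by blast
  next
    show "\<Inter>U \<subseteq> \<Inter>\<S>"
    proof
      fix x assume x: "x \<in> \<Inter>U"
      show "x \<in> \<Inter>\<S>"
      proof
        fix X assume X: "X \<in> \<S>"
        then obtain T where T: "T \<subseteq> \<F>" "X = \<Inter>T" using S by (auto simp: IntFam_def)
        have "T \<subseteq> U" using T X unfolding U_def by blast
        then show "x \<in> X" using x T by blast
      qed
    qed
  qed
  moreover have "U \<subseteq> \<F>" unfolding U_def by blast
  ultimately show "\<Inter>\<S> \<in> IntFam \<F>" unfolding IntFam_def by blast
next
  fix H G :: "'a set" assume H: "H \<in> IntFam \<F>" and G: "G \<in> Filt"
  then obtain T where T: "T \<subseteq> \<F>" "H = \<Inter>T" by (auto simp: IntFam_def)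
  define V where "V = {{x. sup x b \<in> F} | F (b::'a). F \<in> T \<and> b \<in> G}"
  have "V \<subseteq> \<F>" using T closed unfolding V_def by blast
  moreover have "filt_diff H G = \<Inter>V"
  proof
    show "filt_diff H G \<subseteq> \<Inter>V"
      unfolding V_def filt_diff_def T(2) by (auto simp: sup_commute)
  next
    show "\<Inter>V \<subseteq> filt_diff H G"
    proof
      fix a assume a: "a \<in> \<Inter>V"
      have "sup b a \<in> F" if "b \<in> G" "F \<in> T" for b F
      proof -
        have "{x. sup x b \<in> F} \<in> V" using that unfolding V_def by blast
        then have "sup a b \<in> F" using a by blast
        then show ?thesis by (simp add: sup_commute)
      qed
      then show "a \<in> filt_diff H G" unfolding filt_diff_def T(2) by blast
    qed
  qed
  ultimately show "filt_diff H G \<in> IntFam \<F>" unfolding IntFam_def by blast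
qed

end
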